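(* For every $y\in\mathbf H^1_{\mathbb C}$, $$\lim_{b\to\infty}\mathrm{Cart}\big(g(1,b)y,\,g(1,-b)y,\,y\big)=-\frac{\pi}{2}.$$
   Context: $\mathbf H^1_{\mathbb C}$ is the set of lines $[v]$ in $\mathbb C^2$ with $B(v,v)>0$, where $B(z,w)=z_1\bar w_1-z_2\bar w_2$. Let $\xi_1=(e_1+e_2)/\sqrt2$, $\xi_2=(e_1-e_2)/\sqrt2$, and for $b\in\mathbb R$ let $g(1,b)\in SU(1,1)$ have matrix $\begin{pmatrix}1&ib\\0&1\end{pmatrix}$ in the basis $(\xi_1,\xi_2)$, acting on $\mathbf H^1_{\mathbb C}$. The Cartan argument is $\mathrm{Cart}(x,y,z)=\arg\big(B(\tilde x,\tilde y)B(\tilde y,\tilde z)B(\tilde z,\tilde x)\big)\in(-\pi/2,\pi/2)$ for any lifts $\tilde x,\tilde y,\tilde z$. *)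

theory Defs
  imports "HOL-Analysis.Analysis"
begin

definition hform :: "complex \<times> complex \<Rightarrow> complex \<times> complex \<Rightarrow> complex" where
  "hform z w = fst z * cnj (fst w) - snd z * cnj (snd w)"

text \<open>Points of complex hyperbolic line: represented by their lifts v with B(v,v) > 0.\<close>
definition in_H1 :: "complex \<times> complex \<Rightarrow> bool" where
  "in_H1 v \<longleftrightarrow> Re (hform v v) > 0"

definition xi1 :: "complex \<times> complex" where
  "xi1 = (complex_of_real (1 / sqrt 2), complex_of_real (1 / sqrt 2))"

definition xi2 :: "complex \<times> complex" where
  "xi2 = (complex_of_real (1 / sqrt 2), - complex_of_real (1 / sqrt 2))"

text \<open>Coordinates of v in the basis (xi1, xi2): v = coord1 v * xi1 + coord2 v * xi2.\<close>
definition coord1 :: "complex \<times> complex \<Rightarrow> complex" where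
  "coord1 v = (fst v + snd v) / complex_of_real (sqrt 2)"

definition coord2 :: "complex \<times> complex \<Rightarrow> complex" where
  "coord2 v = (fst v - snd v) / complex_of_real (sqrt 2)"

definition lincomb :: "complex \<Rightarrow> complex \<times> complex \<Rightarrow> complex \<Rightarrow> complex \<times> complex \<Rightarrow> complex \<times> complex" where
  "lincomb a u c w = (a * fst u + c * fst w, a * snd u + c * snd w)"

text \<open>g(1,b): matrix ((1, i b), (0, 1)) in the basis (xi1, xi2).\<close>
definition g_act :: "real \<Rightarrow> complex \<times> complex \<Rightarrow> complex \<times> complex" where
  "g_act b v = lincomb (coord1 v + \<i> * complex_of_real b * coord2 v) xi1 (coord2 v) xi2"

text \<open>Cartan argument, computed on lifts; Arg takes values in (-pi, pi], which agrees with
  the paper's range (-pi/2, pi/2) on triples of points of the hyperbolic line.\<close>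
definition Cart :: "complex \<times> complex \<Rightarrow> complex \<times> complex \<Rightarrow> complex \<times> complex \<Rightarrow> real" where
  "Cart x y z = Arg (hform x y * hform y z * hform z x)"

end

theory Submission
  imports Defs
begin

lemma t_facts: "complex_of_real (sqrt 2) * complex_of_real (sqrt 2) = 2"
  "cnj (complex_of_real (sqrt 2)) = complex_of_real (sqrt 2)"
  "complex_of_real (sqrt 2) \<noteq> 0"
  "complex_of_real (1 / sqrt 2) = complex_of_real (sqrt 2) / 2"
proof -
  show "complex_of_real (sqrt 2) * complex_of_real (sqrt 2) = 2"
  proof -
    have "complex_of_real (sqrt 2 * sqrt 2) = 2" unfolding real_sqrt_mult_self by simp
    then show ?thesis by (simp only: of_real_mult)
  qed
  show "cnj (complex_of_real (sqrt 2)) = complex_of_real (sqrt 2)" by simp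
  show "complex_of_real (sqrt 2) \<noteq> 0" by simp
  have h: "sqrt 2 * sqrt 2 = (2::real)" by simp
  have "1 / sqrt 2 = sqrt 2 / (2::real)"
    by (simp add: divide_simps h)
  then have "complex_of_real (1 / sqrt 2) = complex_of_real (sqrt 2 / 2)" by (rule arg_cong)
  then show "complex_of_real (1 / sqrt 2) = complex_of_real (sqrt 2) / 2"
    by (simp only: of_real_divide of_real_numeral)
qed

lemma hform_coord: "hform v w = coord1 v * cnj (coord2 w) + coord2 v * cnj (coord1 w)"
proof -
  obtain a b where v: "v = (a,b)" by (cases v)
  obtain c d where w: "w = (c,d)" by (cases w)
  define t where "t = complex_of_real (sqrt 2)"
  have s: "t * t = 2" and ct: "cnj t = t" using t_facts unfolding t_def by auto
  have "coord1 v * cnj (coord2 w) + coord2 v * cnj (coord1 w)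
     = (a+b)/t * ((cnj c - cnj d)/t) + (a-b)/t * ((cnj c + cnj d)/t)"
    unfolding coord1_def coord2_def v w t_def[symmetric] fst_conv snd_conv
    by (simp only: complex_cnj_divide complex_cnj_add complex_cnj_diff ct)
  also have "\<dots> = ((a+b)*(cnj c - cnj d) + (a-b)*(cnj c + cnj d)) / (t*t)"
    by (simp only: times_divide_times_eq add_divide_distrib[symmetric])
  also have "(a+b)*(cnj c - cnj d) + (a-b)*(cnj c + cnj d) = 2 * (a * cnj c - b * cnj d)"
    by (simp add: algebra_simps)
  also have "2 * (a * cnj c - b * cnj d) / (t * t) = hform v w"
    unfolding s hform_def v w by simp
  finally show ?thesis by simp
qed

lemma coord_g: "coord1 (g_act b v) = coord1 v + \<i> * complex_of_real b * coord2 v"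
  "coord2 (g_act b v) = coord2 v"
proof -
  define t where "t = complex_of_real (sqrt 2)"
  have nz: "t \<noteq> 0" and k: "complex_of_real (1 / sqrt 2) = t / 2"
    using t_facts unfolding t_def by auto
  define A where "A = coord1 v + \<i> * complex_of_real b * coord2 v"
  define B where "B = coord2 v"
  have g: "g_act b v = (A * (t/2) + B * (t/2), A * (t/2) + B * (- (t/2)))"
    unfolding g_act_def lincomb_def xi1_def xi2_def A_def[symmetric] unfolding B_def[symmetric] k
    by simp
  have e1: "A * (t/2) + B * (t/2) + (A * (t/2) + B * (- (t/2))) = A * t"
    by (simp add: algebra_simps)
  have e2: "A * (t/2) + B * (t/2) - (A * (t/2) + B * (- (t/2))) = B * t"
    by (simp add: algebra_simps)
  have "coord1 (g_act b v) = (A * t) / t"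
    unfolding g coord1_def fst_conv snd_conv e1 t_def[symmetric] ..
  then show "coord1 (g_act b v) = coord1 v + \<i> * complex_of_real b * coord2 v"
    using nz unfolding A_def by simp
  have "coord2 (g_act b v) = (B * t) / t"
    unfolding g coord2_def fst_conv snd_conv e2 t_def[symmetric] ..
  then show "coord2 (g_act b v) = coord2 v"
    using nz unfolding B_def by simp
qed

lemma lim_aux:
  fixes r c :: real
  assumes r: "r > 0" and c: "c > 0"
  shows "filterlim (\<lambda>b. - 2 * (b*c)^3 / (r * (r^2 + 3 * (b*c)^2))) at_bot at_top"
proof -
  have l: "filterlim (\<lambda>b. - ((c / (2*r)) * b)) at_bot at_top"
    unfolding filterlim_uminus_at_top[symmetric]
    by (rule filterlim_tendsto_pos_mult_at_top[OF tendsto_const _ filterlim_ident]) (use r c in simp)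
  show ?thesis
  proof (rule filterlim_at_bot_mono[OF l])
    show "\<forall>\<^sub>F b in at_top. - 2 * (b*c)^3 / (r * (r^2 + 3 * (b*c)^2)) \<le> - ((c / (2*r)) * b)"
      using eventually_ge_at_top[of "r / c"]
    proof eventually_elim
      case (elim b)
      define s where "s = b * c"
      have sr: "s \<ge> r" using elim c unfolding s_def by (simp add: pos_divide_le_eq)
      have s0: "s > 0" using sr r by simp
      have d: "r * (r^2 + 3 * s^2) > 0" using r by (simp add: add_pos_nonneg)
      have P: "s * (r^2 + 3 * s^2) \<le> 4 * s^3"
      proof -
        have "r^2 \<le> s^2" using sr r by (simp add: power_mono)
        then show ?thesis using s0 by (simp add: power2_eq_square power3_eq_cube algebra_simps)
      qed
      have k: "s * (r * (r^2 + 3 * s^2)) \<le> (2*r) * (2 * s^3)"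
        using mult_left_mono[OF P, of r] r by (simp add: algebra_simps)
      have "s / (2*r) \<le> (2 * s^3) / (r * (r^2 + 3 * s^2))"
        using k d r by (simp add: divide_simps)
      then have "- 2 * s^3 / (r * (r^2 + 3 * s^2)) \<le> - (s / (2*r))"
        by simp
      moreover have "c / (2*r) * b = s / (2*r)" unfolding s_def by simp
      ultimately show ?case unfolding s_def[symmetric] by linarith
    qed
  qed
qed

lemma hcalc:
  fixes p q :: complex and b c r :: real
  assumes qq: "q * cnj q = complex_of_real c" and r: "r = 2 * Re (p * cnj q)"
  shows "(p + \<i> * complex_of_real b * q) * cnj q + q * cnj (p + \<i> * complex_of_real (-b) * q) = Complex r (2*(b*c))"
    "(p + \<i> * complex_of_real (-b) * q) * cnj q + q * cnj p = Complex r (-(b*c))"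
    "p * cnj q + q * cnj (p + \<i> * complex_of_real b * q) = Complex r (-(b*c))"
proof -
  define w where "w = p * cnj q"
  have ww: "w + cnj w = complex_of_real r" unfolding r w_def by (simp add: complex_eq_iff)
  have "(p + \<i> * complex_of_real b * q) * cnj q + q * cnj (p + \<i> * complex_of_real (-b) * q)
     = (w + cnj w) + 2 * \<i> * complex_of_real b * (q * cnj q)"
    unfolding w_def by (simp add: algebra_simps)
  then show "(p + \<i> * complex_of_real b * q) * cnj q + q * cnj (p + \<i> * complex_of_real (-b) * q) = Complex r (2*(b*c))"
    unfolding ww qq by (simp add: complex_eq_iff)
  have "(p + \<i> * complex_of_real (-b) * q) * cnj q + q * cnj p
     = (w + cnj w) - \<i> * complex_of_real b * (q * cnj q)"
    unfolding w_def by (simp add: algebra_simps)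
  then show "(p + \<i> * complex_of_real (-b) * q) * cnj q + q * cnj p = Complex r (-(b*c))"
    unfolding ww qq by (simp add: complex_eq_iff)
  have "p * cnj q + q * cnj (p + \<i> * complex_of_real b * q)
     = (w + cnj w) - \<i> * complex_of_real b * (q * cnj q)"
    unfolding w_def by (simp add: algebra_simps)
  then show "p * cnj q + q * cnj (p + \<i> * complex_of_real b * q) = Complex r (-(b*c))"
    unfolding ww qq by (simp add: complex_eq_iff)
qed
lemma pcalc: "Complex r (2 * u) * Complex r (- u) * Complex r (- u) = Complex (r * (r^2 + 3 * u^2)) (- 2 * u^3)"
  by (simp add: complex_eq_iff power2_eq_square power3_eq_cube algebra_simps)

theorem mainTheorem16:
  fixes y :: "complex \<times> complex"
  assumes "in_H1 y"
  shows "((\<lambda>b::real. Cart (g_act b y) (g_act (- b) y) y) \<longlongrightarrow> - pi / 2) at_top"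
proof -
  define p where "p = coord1 y"
  define q where "q = coord2 y"
  define r where "r = Re (hform y y)"
  define c where "c = (cmod q)^2"
  have r0: "r > 0" using assms unfolding in_H1_def r_def by simp
  have rw: "r = 2 * Re (p * cnj q)"
    unfolding r_def hform_coord p_def[symmetric] q_def[symmetric] by simp
  have qq: "q * cnj q = complex_of_real c" unfolding c_def by (simp add: complex_norm_square[symmetric])
  have q0: "q \<noteq> 0"
  proof
    assume "q = 0"
    then have "r = 0" using rw by simp
    then show False using r0 by simp
  qed
  have c0: "c > 0" using q0 unfolding c_def by simp
  have prod: "hform (g_act b y) (g_act (- b) y) * hform (g_act (- b) y) y * hform y (g_act b y)
      = Complex (r * (r^2 + 3 * (b*c)^2)) (- 2 * (b*c)^3)" for b
    unfolding hform_coord coord_g p_def[symmetric] q_def[symmetric] hcalc[OF qq rw] by (rule pcalc)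
  have eq: "Cart (g_act b y) (g_act (- b) y) y = arctan (- 2 * (b*c)^3 / (r * (r^2 + 3 * (b*c)^2)))" for b
  proof -
    have "r * (r^2 + 3 * (b*c)^2) > 0" using r0 by (simp add: add_pos_nonneg)
    then have "Re (Complex (r * (r^2 + 3 * (b*c)^2)) (- 2 * (b*c)^3)) > 0" by (simp only: complex.sel)
    then show ?thesis unfolding Cart_def prod by (simp only: arg_conv_arctan complex.sel)
  qed
  have "((\<lambda>b. arctan (- 2 * (b*c)^3 / (r * (r^2 + 3 * (b*c)^2)))) \<longlongrightarrow> - (pi/2)) at_top"
    by (rule filterlim_compose[OF tendsto_arctan_at_bot lim_aux[OF r0 c0]])
  then have "((\<lambda>b. Cart (g_act b y) (g_act (- b) y) y) \<longlongrightarrow> - (pi/2)) at_top"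
    unfolding eq .
  then show ?thesis by (simp only: minus_divide_left)
qed

end
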